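(* Let $n\ge 1$ be an integer and let $f:\mathbb{R}\to\mathbb{R}$ be a discontinuous additive function whose graph $G(f)$ is connected. Then $F(x)=x^{n-1}f(x)$ is a discontinuous $n$-monomial function whose graph $G(F)=\{(x,F(x)):x\in\mathbb{R}\}$ is connected.
   Context: For $h\in\mathbb{R}$, $\Delta_h f(x)=f(x+h)-f(x)$ and $\Delta_h^{n}=\Delta_h\circ\Delta_h^{n-1}$. A function $f:\mathbb{R}\to\mathbb{R}$ is an $n$-monomial function if $\frac{1}{n!}\Delta_h^n f(x)=f(h)$ for all $x,h\in\mathbb{R}$. An additive function satisfies $f(x+y)=f(x)+f(y)$ for all $x,y$. The graph of a function $g$ is $G(g)=\{(x,g(x))\}\subseteq\mathbb{R}^2$. *)

theory Defs
  imports "HOL-Analysis.Analysis"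
begin

definition diff_op :: "real \<Rightarrow> (real \<Rightarrow> real) \<Rightarrow> (real \<Rightarrow> real)" where
  "diff_op h f = (\<lambda>x. f (x + h) - f x)"

definition monomial_fun :: "nat \<Rightarrow> (real \<Rightarrow> real) \<Rightarrow> bool" where
  "monomial_fun n f \<longleftrightarrow> (\<forall>x h. (1 / fact n) * (diff_op h ^^ n) f x = f h)"

definition additive_fun :: "(real \<Rightarrow> real) \<Rightarrow> bool" where
  "additive_fun f \<longleftrightarrow> (\<forall>x y. f (x + y) = f x + f y)"

definition graph :: "(real \<Rightarrow> real) \<Rightarrow> (real \<times> real) set" where
  "graph g = {(x, g x) | x. True}"

end

theory Submission
  imports Defs
begin

lemma diff_op_funpow_lin:
  "(diff_op h ^^ n) (\<lambda>t. \<Sum>i\<in>A. c i * g i t) x = (\<Sum>i\<in>A. c i * (diff_op h ^^ n) (g i) x)"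
proof (induction n arbitrary: g x)
  case 0
  then show ?case by simp
next
  case (Suc n)
  have "diff_op h (\<lambda>t. \<Sum>i\<in>A. c i * g i t) = (\<lambda>t. \<Sum>i\<in>A. c i * diff_op h (g i) t)"
    by (simp add: diff_op_def sum_subtractf[symmetric] algebra_simps)
  then show ?case by (simp add: funpow_Suc_right Suc.IH del: funpow.simps)
qed

lemma diff_op_funpow_lin2:
  "(diff_op h ^^ n) (\<lambda>t. a * g t + b * k t) x = a * (diff_op h ^^ n) g x + b * (diff_op h ^^ n) k x"
proof (induction n arbitrary: g k x)
  case 0
  then show ?case by simp
next
  case (Suc n)
  have "diff_op h (\<lambda>t. a * g t + b * k t) = (\<lambda>t. a * diff_op h g t + b * diff_op h k t)"
    by (simp add: diff_op_def algebra_simps)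
  then show ?case by (simp add: funpow_Suc_right Suc.IH del: funpow.simps)
qed

lemma diff_op_power:
  "diff_op h (\<lambda>t. t ^ j) = (\<lambda>t. \<Sum>i<j. (of_nat (j choose i) * h ^ (j - i)) * t ^ i)"
proof
  fix t :: real
  have "(t + h) ^ j = (\<Sum>i\<le>j. of_nat (j choose i) * t ^ i * h ^ (j - i))"
    by (simp add: binomial_ring)
  also have "\<dots> = (\<Sum>i<j. of_nat (j choose i) * t ^ i * h ^ (j - i)) + t ^ j"
    by (simp add: lessThan_Suc_atMost[symmetric])
  finally show "diff_op h (\<lambda>t. t ^ j) t = (\<Sum>i<j. (of_nat (j choose i) * h ^ (j - i)) * t ^ i)"
    by (simp add: diff_op_def algebra_simps)
qed

lemma diff_op_funpow_power:
  "j \<le> n \<Longrightarrow> (diff_op h ^^ n) (\<lambda>t. t ^ j) x = (if j = n then fact n * h ^ n else 0)"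
proof (induction n arbitrary: j x)
  case 0
  then show ?case by simp
next
  case (Suc n)
  have "(diff_op h ^^ Suc n) (\<lambda>t. t ^ j) x
      = (\<Sum>i<j. (of_nat (j choose i) * h ^ (j - i)) * (diff_op h ^^ n) (\<lambda>t. t ^ i) x)"
    by (simp add: funpow_Suc_right diff_op_power diff_op_funpow_lin del: funpow.simps)
  also have "\<dots> = (\<Sum>i<j. (of_nat (j choose i) * h ^ (j - i)) * (if i = n then fact n * h ^ n else 0))"
    using Suc.prems by (intro sum.cong refl) (simp add: Suc.IH)
  also have "\<dots> = (if j = Suc n then fact (Suc n) * h ^ Suc n else 0)"
  proof (cases "j = Suc n")
    case True
    have "(\<Sum>i<j. (of_nat (j choose i) * h ^ (j - i)) * (if i = n then fact n * h ^ n else 0))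
        = (of_nat (j choose n) * h ^ (j - n)) * (fact n * h ^ n)"
    proof -
      have "(\<Sum>i<j. (of_nat (j choose i) * h ^ (j - i)) * (if i = n then fact n * h ^ n else 0))
          = (\<Sum>i<j. if i = n then (of_nat (j choose n) * h ^ (j - n)) * (fact n * h ^ n) else 0)"
        by (intro sum.cong) auto
      then show ?thesis using True by simp
    qed
    then show ?thesis using True by (simp add: algebra_simps)
  next
    case False
    then have "j \<le> n" using Suc.prems by simp
    then show ?thesis using False by (intro trans[OF sum.neutral]) auto
  qed
  finally show ?case .
qed

lemma diff_op_funpow_agree:
  "(\<And>k. k \<le> n \<Longrightarrow> g (x + real k * h) = g' (x + real k * h)) \<Longrightarrow>
   (diff_op h ^^ n) g x = (diff_op h ^^ n) g' x"
proof (induction n arbitrary: g g' x)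
  case 0
  then show ?case using "0.prems"[of 0] by simp
next
  case (Suc n)
  have "(diff_op h ^^ n) (diff_op h g) x = (diff_op h ^^ n) (diff_op h g') x"
  proof (rule Suc.IH)
    fix k assume "k \<le> n"
    then have "g (x + real k * h) = g' (x + real k * h)"
      "g (x + real (Suc k) * h) = g' (x + real (Suc k) * h)" using Suc.prems[of k] Suc.prems[of "Suc k"] by auto
    then show "diff_op h g (x + real k * h) = diff_op h g' (x + real k * h)"
      by (simp add: diff_op_def algebra_simps)
  qed
  then show ?case by (simp add: funpow_Suc_right del: funpow.simps)
qed

lemma additive_nat:
  assumes "additive_fun f"
  shows "f (x + real k * h) = f x + real k * f h"
proof (induction k)
  case 0
  then show ?case using assms[unfolded additive_fun_def, rule_format, of x 0] by simp
next
  case (Suc k)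
  have "f (x + real (Suc k) * h) = f ((x + real k * h) + h)" by (simp add: algebra_simps)
  also have "\<dots> = f (x + real k * h) + f h" using assms by (simp add: additive_fun_def)
  finally show ?case using Suc by (simp add: algebra_simps)
qed

theorem mainTheorem3:
  fixes n :: nat and f :: "real \<Rightarrow> real"
  assumes "n \<ge> 1"
    and "additive_fun f"
    and "\<not> continuous_on UNIV f"
    and "connected (graph f)"
  shows "monomial_fun n (\<lambda>x. x ^ (n - 1) * f x)
       \<and> \<not> continuous_on UNIV (\<lambda>x. x ^ (n - 1) * f x)
       \<and> connected (graph (\<lambda>x. x ^ (n - 1) * f x))"
proof (intro conjI)
  define F where "F = (\<lambda>x. x ^ (n - 1) * f x)"
  have f0: "f 0 = 0" using assms(2)[unfolded additive_fun_def, rule_format, of 0 0] by simp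
  show "monomial_fun n (\<lambda>x. x ^ (n - 1) * f x)"
    unfolding monomial_fun_def
  proof (intro allI)
    fix x h :: real
    show "1 / fact n * (diff_op h ^^ n) (\<lambda>x. x ^ (n - 1) * f x) x = h ^ (n - 1) * f h"
    proof (cases "h = 0")
      case True
      have "(diff_op 0 ^^ n) g x = 0" for g :: "real \<Rightarrow> real"
      proof -
        obtain m where m: "n = Suc m" using assms(1) by (cases n) auto
        have "(diff_op 0 ^^ n) g x = (diff_op 0 ^^ m) (\<lambda>t. 0 * g t + 0 * g t) x"
          unfolding m funpow_Suc_right o_def by (simp add: diff_op_def del: funpow.simps)
        also have "\<dots> = 0" by (subst diff_op_funpow_lin2) simp
        finally show ?thesis .
      qed
      then show ?thesis using True f0 by simp
    next
      case False
      define a where "a = f x - x * f h / h"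
      define b where "b = f h / h"
      have "(diff_op h ^^ n) (\<lambda>x. x ^ (n - 1) * f x) x
          = (diff_op h ^^ n) (\<lambda>t. a * t ^ (n - 1) + b * t ^ n) x"
      proof (rule diff_op_funpow_agree)
        fix k assume "k \<le> n"
        have e: "(x + real k * h) ^ n = (x + real k * h) ^ (n - 1) * (x + real k * h)"
          using assms(1) by (metis Suc_diff_1 less_one not_le power_Suc2 zero_less_one le_less_trans)
        show "(x + real k * h) ^ (n - 1) * f (x + real k * h)
            = a * (x + real k * h) ^ (n - 1) + b * (x + real k * h) ^ n"
          unfolding e additive_nat[OF assms(2)] a_def b_def using False
          by (simp add: field_simps)
      qed
      also have "\<dots> = b * (fact n * h ^ n)"
        using assms(1) by (simp add: diff_op_funpow_lin2 diff_op_funpow_power)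
      finally show ?thesis using False assms(1) unfolding b_def
        by (simp add: field_simps power_eq_if)
    qed
  qed
  show "\<not> continuous_on UNIV (\<lambda>x. x ^ (n - 1) * f x)"
  proof
    assume c: "continuous_on UNIV (\<lambda>x. x ^ (n - 1) * f x)"
    have feq: "f = (\<lambda>x. x ^ (n - 1) * f x / x ^ (n - 1))"
    proof
      fix x :: real
      show "f x = x ^ (n - 1) * f x / x ^ (n - 1)"
        by (cases "x = 0") (auto simp: f0)
    qed
    have "isCont (\<lambda>x. x ^ (n - 1) * f x / x ^ (n - 1)) 1"
    proof (rule isCont_divide)
      show "isCont (\<lambda>x. x ^ (n - 1) * f x) 1" using c by (simp add: continuous_on_eq_continuous_at)
    qed (auto intro: continuous_intros)
    then have c1: "isCont f 1" using feq by simp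
    have "isCont f y" for y
    proof -
      have "isCont (\<lambda>t. f (t + (1 - y)) - f (1 - y)) y"
        using c1 by (intro continuous_intros isCont_o2[where f = "\<lambda>t. t + (1 - y)"]) auto
      moreover have "(\<lambda>t. f (t + (1 - y)) - f (1 - y)) = f"
        using assms(2) by (auto simp: additive_fun_def)
      ultimately show ?thesis by simp
    qed
    then show False using assms(3) by (simp add: continuous_at_imp_continuous_on)
  qed
  show "connected (graph (\<lambda>x. x ^ (n - 1) * f x))"
  proof -
    have "(\<lambda>p. (fst p, fst p ^ (n - 1) * snd p)) ` graph f = graph (\<lambda>x. x ^ (n - 1) * f x)"
      unfolding graph_def by (auto simp: image_iff)
    moreover have "connected ((\<lambda>p. (fst p, fst p ^ (n - 1) * snd p)) ` graph f)"
      by (intro connected_continuous_image assms(4) continuous_intros)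
    ultimately show ?thesis by simp
  qed
qed

end
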